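(* Let $p$ be an odd prime, $a\ge1$ an integer, and $N$ a positive integer with $p\mid N$. Then \[ \sum_{b=0}^{a}\binom{a}{b}F_a^{(b)}(\emptyset,2N,p)=\frac{N}{a+1}\,Z_{a+1}(N,p). \]
   Context: For a prime $p$, $\mathcal P_p$ is the set of positive integers not divisible by $p$. $Z_n(N,p):=\sum\frac{1}{l_1\cdots l_n}$ over $(l_1,\dots,l_n)\in\mathcal P_p^n$ with $l_1+\dots+l_n=N$ (for $p\mid N$). Write $\bar1$ for a formal "signed $1$", $\varepsilon(1)=1$, $\varepsilon(\bar1)=-1$. For integers $a\ge b\ge0$, $d\ge0$, $\mathbf s=(s_1,\dots,s_d)\in\{1,\bar1\}^d$, and $M$ with $p\mid M$, \[F_a^{(b)}(\mathbf s,M,p):=\sum\frac{\varepsilon(s_1)^{i_1}\cdots\varepsilon(s_d)^{i_d}(-1)^{l_1+\dots+l_b}}{i_1\cdots i_d\,l_1\cdots l_a},\] the sum over integers $i_1,\dots,i_d$ and $l_1,\dots,l_a\in\mathcal P_p$ with $M>i_1>\dots>i_d>l_1+\dots+l_a$ and $M-i_1,\ i_1-i_2,\dots,i_{d-1}-i_d,\ i_d-(l_1+\dots+l_a)\in\mathcal P_p$ (when $d=0$ the conditions read $M>l_1+\dots+l_a$ and $M-(l_1+\dots+l_a)\in\mathcal P_p$). $\emptyset$ is the empty tuple. *)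

theory Defs
  imports Complex_Main "HOL-Library.FuncSet" "HOL-Computational_Algebra.Primes"
begin

definition PP :: "nat \<Rightarrow> nat set" where
  "PP p = {l. 0 < l \<and> \<not> p dvd l}"

definition Zsum :: "nat \<Rightarrow> nat \<Rightarrow> nat \<Rightarrow> real" where
  "Zsum n N p = (\<Sum>l \<in> {l \<in> {..<n} \<rightarrow>\<^sub>E {1..N}. (\<forall>j<n. l j \<in> PP p) \<and> (\<Sum>j<n. l j) = N}.
       1 / (\<Prod>j<n. real (l j)))"

text \<open>Signed ones: True encodes the signed one (bar 1), False encodes 1.\<close>
definition eps :: "bool \<Rightarrow> real" where
  "eps s = (if s then -1 else 1)"

text \<open>The chain M = c_0 > c_1 = i_1 > ... > c_d = i_d > c_(d+1) = l_1+...+l_a.\<close>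
definition chain_val :: "nat \<Rightarrow> nat \<Rightarrow> (nat \<Rightarrow> nat) \<Rightarrow> nat \<Rightarrow> nat \<Rightarrow> nat" where
  "chain_val M d i L k = (if k = 0 then M else if k \<le> d then i (k - 1) else L)"

definition Fsum :: "nat \<Rightarrow> nat \<Rightarrow> bool list \<Rightarrow> nat \<Rightarrow> nat \<Rightarrow> real" where
  "Fsum a b s M p = (let d = length s in
     (\<Sum>(i, l) \<in> {(i, l). i \<in> {..<d} \<rightarrow>\<^sub>E {1..M} \<and> l \<in> {..<a} \<rightarrow>\<^sub>E {1..M}
          \<and> (\<forall>j<a. l j \<in> PP p)
          \<and> (\<forall>k\<le>d. chain_val M d i (\<Sum>j<a. l j) (Suc k) < chain_val M d i (\<Sum>j<a. l j) k
                 \<and> chain_val M d i (\<Sum>j<a. l j) k - chain_val M d i (\<Sum>j<a. l j) (Suc k) \<in> PP p)}.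
        (\<Prod>j<d. eps (s ! j) ^ (i j)) * (-1) ^ (\<Sum>j<b. l j)
        / ((\<Prod>j<d. real (i j)) * (\<Prod>j<a. real (l j)))))"

end

theory Submission
  imports Defs
begin

definition Sset :: "nat \<Rightarrow> nat \<Rightarrow> nat \<Rightarrow> (nat \<Rightarrow> bool) \<Rightarrow> (nat \<Rightarrow> nat) set" where
  "Sset n K p Q = {l \<in> {..<n} \<rightarrow>\<^sub>E {1..K}. (\<forall>j<n. l j \<in> PP p) \<and> Q (\<Sum>j<n. l j)}"

definition pm :: "nat \<Rightarrow> (nat \<Rightarrow> nat) \<Rightarrow> (nat \<Rightarrow> nat) \<Rightarrow> nat \<Rightarrow> nat" where
  "pm n \<sigma> l = (\<lambda>j. if j < n then l (\<sigma> j) else undefined)"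

lemma finite_Sset: "finite (Sset n K p Q)"
  unfolding Sset_def by (rule finite_subset[of _ "{..<n} \<rightarrow>\<^sub>E {1..K}"]) (auto intro: finite_PiE)

lemma pm_in:
  assumes s: "bij_betw \<sigma> {..<n} {..<n}" and l: "l \<in> Sset n K p Q"
  shows "pm n \<sigma> l \<in> Sset n K p Q"
proof -
  have sm: "\<sigma> j < n" if "j < n" for j using s that by (auto simp: bij_betw_def)
  have "(\<Sum>j<n. pm n \<sigma> l j) = (\<Sum>j<n. l (\<sigma> j))" by (simp add: pm_def)
  also have "\<dots> = (\<Sum>j<n. l j)" by (rule sum.reindex_bij_betw[OF s])
  finally show ?thesis using l sm unfolding Sset_def by (auto simp: pm_def PiE_def Pi_def extensional_def)
qed

lemma pm_pm: "j < n \<Longrightarrow> pm n \<tau> (pm n \<sigma> l) j = l (\<sigma> (\<tau> j))" if "\<forall>j<n. \<tau> j < n"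
  using that by (simp add: pm_def)

lemma sym_sum:
  assumes s: "bij_betw \<sigma> {..<n} {..<n}"
  shows "(\<Sum>l\<in>Sset n K p Q. g l) = (\<Sum>l\<in>Sset n K p Q. g (pm n \<sigma> l))"
proof -
  define \<tau> where "\<tau> = inv_into {..<n} \<sigma>"
  have t: "bij_betw \<tau> {..<n} {..<n}" unfolding \<tau>_def by (rule bij_betw_inv_into[OF s])
  have sm: "\<sigma> j < n" if "j < n" for j using s that by (auto simp: bij_betw_def)
  have tm: "\<tau> j < n" if "j < n" for j using t that by (auto simp: bij_betw_def)
  have st: "\<sigma> (\<tau> j) = j" if "j < n" for j using s that unfolding \<tau>_def
    by (metis bij_betw_inv_into_right lessThan_iff)
  have ts: "\<tau> (\<sigma> j) = j" if "j < n" for j using s that unfolding \<tau>_def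
    by (metis bij_betw_inv_into_left lessThan_iff)
  have ext: "l j = undefined" if "l \<in> Sset n K p Q" "\<not> j < n" for l j
    using that unfolding Sset_def by (auto simp: PiE_def extensional_def)
  have "bij_betw (pm n \<sigma>) (Sset n K p Q) (Sset n K p Q)"
  proof (rule bij_betw_byWitness[where f'="pm n \<tau>"])
    show "\<forall>l\<in>Sset n K p Q. pm n \<tau> (pm n \<sigma> l) = l"
      using ext st tm by (auto simp: pm_def fun_eq_iff) (metis ext)
    show "\<forall>l\<in>Sset n K p Q. pm n \<sigma> (pm n \<tau> l) = l"
      using ext ts sm by (auto simp: pm_def fun_eq_iff) (metis ext)
    show "pm n \<sigma> ` Sset n K p Q \<subseteq> Sset n K p Q" using pm_in[OF s] by auto
    show "pm n \<tau> ` Sset n K p Q \<subseteq> Sset n K p Q" using pm_in[OF t] by auto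
  qed
  then show ?thesis by (rule sum.reindex_bij_betw[symmetric])
qed

lemma exists_perm:
  assumes "S \<subseteq> {..<n}" "card S = b"
  shows "\<exists>\<sigma>. bij_betw \<sigma> {..<n} {..<n} \<and> \<sigma> ` {..<b} = S"
proof -
  have fS: "finite S" using assms finite_subset by blast
  have bn: "b \<le> n" using assms card_mono[of "{..<n}" S] by auto
  obtain f where f: "bij_betw f {..<b} S" using finite_same_card_bij[of "{..<b}" S] fS assms by auto
  have "card ({..<n} - S) = n - b" using assms fS by (simp add: card_Diff_subset)
  then obtain g where g: "bij_betw g {b..<n} ({..<n} - S)"
    using finite_same_card_bij[of "{b..<n}" "{..<n} - S"] by auto
  define \<sigma> where "\<sigma> j = (if j < b then f j else g j)" for j
  have f': "bij_betw \<sigma> {..<b} S" using f by (rule bij_betw_cong[THEN iffD1, rotated]) (auto simp: \<sigma>_def)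
  have g': "bij_betw \<sigma> {b..<n} ({..<n} - S)" using g by (rule bij_betw_cong[THEN iffD1, rotated]) (auto simp: \<sigma>_def)
  have "bij_betw \<sigma> ({..<b} \<union> {b..<n}) (S \<union> ({..<n} - S))"
    by (rule bij_betw_combine[OF f' g']) auto
  moreover have "{..<b} \<union> {b..<n} = {..<n}" using bn by auto
  moreover have "S \<union> ({..<n} - S) = {..<n}" using assms by auto
  ultimately show ?thesis using f' by (auto simp: bij_betw_def)
qed

lemma Fsum_empty:
  "Fsum a b [] M p = (\<Sum>l\<in>Sset a M p (\<lambda>s. s < M \<and> M - s \<in> PP p).
      (-1) ^ (\<Sum>j<b. l j) / (\<Prod>j<a. real (l j)))"
proof -
  have e: "{(i, l). i \<in> {..<length ([]::bool list)} \<rightarrow>\<^sub>E {1..M} \<and> l \<in> {..<a} \<rightarrow>\<^sub>E {1..M}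
          \<and> (\<forall>j<a. l j \<in> PP p)
          \<and> (\<forall>k\<le>length ([]::bool list). chain_val M (length ([]::bool list)) i (\<Sum>j<a. l j) (Suc k) < chain_val M (length ([]::bool list)) i (\<Sum>j<a. l j) k
                 \<and> chain_val M (length ([]::bool list)) i (\<Sum>j<a. l j) k - chain_val M (length ([]::bool list)) i (\<Sum>j<a. l j) (Suc k) \<in> PP p)}
     = (\<lambda>l. ((\<lambda>_. undefined), l)) ` Sset a M p (\<lambda>s. s < M \<and> M - s \<in> PP p)"
    by (auto simp: Sset_def chain_val_def image_iff)
  show ?thesis unfolding Fsum_def Let_def e
    by (subst sum.reindex) (auto simp: inj_on_def)
qed

lemma sum_pow_neg1: "(-1::real) ^ (\<Sum>j\<in>S. l j) = (\<Prod>j\<in>S. (-1) ^ l j)"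
  by (rule power_sum)

lemma step2:
  fixes a K p :: nat and Q and A defines "A \<equiv> Sset a K p Q"
  shows "(\<Sum>b = 0..a. real (a choose b) * (\<Sum>l\<in>A. (-1) ^ (\<Sum>j<b. l j) / (\<Prod>j<a. real (l j))))
     = (\<Sum>l\<in>A. (\<Prod>j<a. (-1) ^ l j + 1) / (\<Prod>j<a. real (l j)))"
proof -
  define G where "G S = (\<Sum>l\<in>A. (-1::real) ^ (\<Sum>j\<in>S. l j) / (\<Prod>j<a. real (l j)))" for S
  have GS: "G S = G {..<b}" if hS: "S \<subseteq> {..<a}" "card S = b" for S b
  proof -
    obtain \<sigma> where s: "bij_betw \<sigma> {..<a} {..<a}" and im: "\<sigma> ` {..<b} = S"
      using exists_perm[OF hS] by auto
    have inj: "inj_on \<sigma> {..<b}" using s im hS card_mono[of "{..<a}" S]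
      by (metis bij_betw_def inj_on_subset lessThan_subset_iff card_lessThan finite_lessThan)
    have "G {..<b} = (\<Sum>l\<in>A. (-1::real) ^ (\<Sum>j<b. pm a \<sigma> l j) / (\<Prod>j<a. real (pm a \<sigma> l j)))"
      unfolding G_def A_def by (rule sym_sum[OF s])
    also have "\<dots> = G S"
    proof -
      have bn: "b \<le> a" using hS card_mono[of "{..<a}" S] by auto
      have "(\<Sum>j<b. pm a \<sigma> l j) = (\<Sum>j<b. l (\<sigma> j))" for l using bn by (auto simp: pm_def intro!: sum.cong)
      also have "\<dots> l = (\<Sum>j\<in>S. l j)" for l using sum.reindex[OF inj, of l] im by simp
      finally have 1: "(\<Sum>j<b. pm a \<sigma> l j) = (\<Sum>j\<in>S. l j)" for l .
      have "(\<Prod>j<a. real (pm a \<sigma> l j)) = (\<Prod>j<a. real (l (\<sigma> j)))" for l by (auto simp: pm_def intro!: prod.cong)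
      also have "\<dots> l = (\<Prod>j<a. real (l j))" for l by (rule prod.reindex_bij_betw[OF s])
      finally have 2: "(\<Prod>j<a. real (pm a \<sigma> l j)) = (\<Prod>j<a. real (l j))" for l .
      show ?thesis unfolding G_def 1 2 ..
    qed
    finally show ?thesis ..
  qed
  have "(\<Sum>b = 0..a. real (a choose b) * (\<Sum>l\<in>A. (-1) ^ (\<Sum>j<b. l j) / (\<Prod>j<a. real (l j))))
      = (\<Sum>b = 0..a. \<Sum>S\<in>{S. S \<in> Pow {..<a} \<and> card S = b}. G S)"
  proof (rule sum.cong[OF refl])
    fix b assume "b \<in> {0..a}"
    have c: "card {S. S \<in> Pow {..<a} \<and> card S = b} = a choose b"
      using n_subsets[of "{..<a}" b] by simp
    have "(\<Sum>S\<in>{S. S \<in> Pow {..<a} \<and> card S = b}. G S) = (\<Sum>S\<in>{S. S \<in> Pow {..<a} \<and> card S = b}. G {..<b})"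
      using GS by (intro sum.cong) auto
    also have "\<dots> = real (a choose b) * G {..<b}" using c by simp
    finally show "real (a choose b) * (\<Sum>l\<in>A. (-1) ^ (\<Sum>j<b. l j) / (\<Prod>j<a. real (l j)))
        = (\<Sum>S\<in>{S. S \<in> Pow {..<a} \<and> card S = b}. G S)" by (simp add: G_def)
  qed
  also have "\<dots> = (\<Sum>S\<in>Pow {..<a}. G S)"
    by (rule sum.group) (auto simp: card_mono[of "{..<a}", simplified] intro: card_mono[of "{..<a}", simplified])
  also have "\<dots> = (\<Sum>l\<in>A. \<Sum>S\<in>Pow {..<a}. (-1::real) ^ (\<Sum>j\<in>S. l j) / (\<Prod>j<a. real (l j)))"
    unfolding G_def by (rule sum.swap)
  also have "\<dots> = (\<Sum>l\<in>A. (\<Prod>j<a. (-1) ^ l j + 1) / (\<Prod>j<a. real (l j)))"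
  proof (rule sum.cong[OF refl])
    fix l
    have "(\<Prod>j<a. (-1::real) ^ l j + 1) = (\<Sum>S\<in>Pow {..<a}. (\<Prod>j\<in>S. (-1) ^ l j) * (\<Prod>j\<in>{..<a}-S. 1))"
      by (rule prod_add) simp
    then show "(\<Sum>S\<in>Pow {..<a}. (-1::real) ^ (\<Sum>j\<in>S. l j) / (\<Prod>j<a. real (l j)))
        = (\<Prod>j<a. (-1) ^ l j + 1) / (\<Prod>j<a. real (l j))"
      by (simp add: power_sum sum_divide_distrib)
  qed
  finally show ?thesis .
qed

lemma PP_double:
  assumes "prime p" "odd p"
  shows "(2 * x \<in> PP p) = (x \<in> PP p)"
proof -
  have "\<not> p dvd 2"
  proof
    assume "p dvd 2"
    then have "p \<le> 2" by (rule dvd_imp_le) simp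
    moreover have "p \<ge> 2" using assms prime_ge_2_nat by blast
    ultimately show False using assms by auto
  qed
  then have "p dvd 2 * x \<longleftrightarrow> p dvd x" using assms prime_dvd_mult_iff by blast
  then show ?thesis by (auto simp: PP_def)
qed

lemma prod_sign:
  "(\<Prod>j<a. (-1::real) ^ l j + 1) = (if \<forall>j<a. even (l j) then 2 ^ a else 0)"
proof (cases "\<forall>j<a. even (l j)")
  case True
  then have "(\<Prod>j<a. (-1::real) ^ l j + 1) = (\<Prod>j<a. 2)" by (intro prod.cong) auto
  then show ?thesis using True by simp
next
  case False
  then obtain j where "j < a" "odd (l j)" by auto
  then have "(\<Prod>j<a. (-1::real) ^ l j + 1) = 0" by (intro prod_zero) (auto intro!: bexI[of _ j])
  then show ?thesis using False by simp
qed

lemma step3: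
  assumes pr: "prime p" and od: "odd p"
  shows "(\<Sum>l\<in>Sset a (2*N) p (\<lambda>s. s < 2*N \<and> 2*N - s \<in> PP p). (\<Prod>j<a. (-1::real) ^ l j + 1) / (\<Prod>j<a. real (l j)))
    = (\<Sum>m\<in>Sset a N p (\<lambda>s. s < N \<and> N - s \<in> PP p). 1 / (\<Prod>j<a. real (m j)))"
proof -
  define A where "A = Sset a (2*N) p (\<lambda>s. s < 2*N \<and> 2*N - s \<in> PP p)"
  define B where "B = Sset a N p (\<lambda>s. s < N \<and> N - s \<in> PP p)"
  define E where "E = {l\<in>A. \<forall>j<a. even (l j)}"
  define dbl where "dbl m = (\<lambda>j. if j < a then 2 * m j else undefined)" for m :: "nat \<Rightarrow> nat"
  define hlf where "hlf l = (\<lambda>j. if j < a then l j div 2 else undefined)" for l :: "nat \<Rightarrow> nat"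
  have PPd: "(2 * x \<in> PP p) = (x \<in> PP p)" for x using PP_double[OF pr od] .
  have "(\<Sum>l\<in>A. (\<Prod>j<a. (-1::real) ^ l j + 1) / (\<Prod>j<a. real (l j)))
      = (\<Sum>l\<in>A. if \<forall>j<a. even (l j) then 2 ^ a / (\<Prod>j<a. real (l j)) else 0)"
    by (intro sum.cong) (auto simp: prod_sign)
  also have "\<dots> = (\<Sum>l\<in>E. 2 ^ a / (\<Prod>j<a. real (l j)))"
    unfolding E_def A_def by (rule sum.inter_filter[symmetric]) (rule finite_Sset)
  also have "\<dots> = (\<Sum>m\<in>B. 2 ^ a / (\<Prod>j<a. real (dbl m j)))"
  proof (rule sum.reindex_bij_betw[symmetric])
    show "bij_betw dbl B E"
    proof (rule bij_betw_byWitness[where f'=hlf])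
      show "\<forall>m\<in>B. hlf (dbl m) = m"
        by (auto simp: B_def Sset_def hlf_def dbl_def fun_eq_iff PiE_def extensional_def)
      show "\<forall>l\<in>E. dbl (hlf l) = l"
        by (auto simp: E_def A_def Sset_def hlf_def dbl_def fun_eq_iff PiE_def extensional_def)
      show "dbl ` B \<subseteq> E"
      proof
        fix l assume "l \<in> dbl ` B"
        then obtain m where m: "m \<in> B" and l: "l = dbl m" by auto
        have s: "(\<Sum>j<a. dbl m j) = 2 * (\<Sum>j<a. m j)"
          by (simp add: dbl_def sum_distrib_left)
        have "2 * N - 2 * (\<Sum>j<a. m j) = 2 * (N - (\<Sum>j<a. m j))" by simp
        moreover have s2: "(\<Sum>j<a. 2 * m j) = 2 * (\<Sum>j<a. m j)" by (simp add: sum_distrib_left)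
        ultimately show "l \<in> E" using m PPd unfolding l E_def A_def B_def Sset_def s
          by (auto simp: dbl_def PiE_def extensional_def Pi_def s2)
      qed
      show "hlf ` E \<subseteq> B"
      proof
        fix m assume "m \<in> hlf ` E"
        then obtain l where l: "l \<in> E" and m: "m = hlf l" by auto
        have ev: "\<forall>j<a. even (l j)" and lA: "l \<in> A" using l by (auto simp: E_def)
        have lj: "l j = 2 * m j" if "j < a" for j using ev that by (simp add: m hlf_def)
        have s: "(\<Sum>j<a. l j) = 2 * (\<Sum>j<a. m j)"
          by (simp add: lj sum_distrib_left)
        have pp: "\<forall>j<a. l j \<in> PP p" and lt: "(\<Sum>j<a. l j) < 2 * N" and dd: "2*N - (\<Sum>j<a. l j) \<in> PP p"
          using lA by (auto simp: A_def Sset_def)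
        have "2 * N - 2 * (\<Sum>j<a. m j) = 2 * (N - (\<Sum>j<a. m j))" by simp
        then have d2: "N - (\<Sum>j<a. m j) \<in> PP p" using dd PPd s by simp
        have ppm: "m j \<in> PP p" if "j < a" for j using pp that lj PPd by metis
        have le: "m j \<le> (\<Sum>j<a. m j)" if "j < a" for j
          using that by (intro member_le_sum) auto
        have pos: "m j \<ge> 1" if "j < a" for j using ppm[OF that] by (auto simp: PP_def)
        show "m \<in> B" unfolding B_def Sset_def using ppm d2 lt s le pos
          by (auto simp: m hlf_def PiE_def extensional_def Pi_def) (fastforce)+
      qed
    qed
  qed
  also have "\<dots> = (\<Sum>m\<in>B. 1 / (\<Prod>j<a. real (m j)))"
  proof (rule sum.cong[OF refl])
    fix m
    have "(\<Prod>j<a. real (dbl m j)) = (\<Prod>j<a. 2 * real (m j))" by (auto simp: dbl_def intro!: prod.cong)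
    also have "\<dots> = 2 ^ a * (\<Prod>j<a. real (m j))" by (simp add: prod.distrib)
    finally show "2 ^ a / (\<Prod>j<a. real (dbl m j)) = 1 / (\<Prod>j<a. real (m j))" by simp
  qed
  finally show ?thesis unfolding A_def B_def .
qed

lemma step4:
  "(\<Sum>m\<in>Sset a N p (\<lambda>s. s < N \<and> N - s \<in> PP p). 1 / (\<Prod>j<a. real (m j)))
   = (\<Sum>c\<in>Sset (Suc a) N p (\<lambda>s. s = N). real (c a) / (\<Prod>j<Suc a. real (c j)))"
proof -
  define B where "B = Sset a N p (\<lambda>s. s < N \<and> N - s \<in> PP p)"
  define C where "C = Sset (Suc a) N p (\<lambda>s. s = N)"
  define ext where "ext m = m(a := N - (\<Sum>j<a. m j))" for m :: "nat \<Rightarrow> nat"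
  define rs where "rs c = (\<lambda>j. if j < a then c j else undefined)" for c :: "nat \<Rightarrow> nat"
  have sext: "(\<Sum>j<a. ext m j) = (\<Sum>j<a. m j)" for m by (auto simp: ext_def intro!: sum.cong)
  have "(\<Sum>c\<in>C. real (c a) / (\<Prod>j<Suc a. real (c j))) = (\<Sum>m\<in>B. real (ext m a) / (\<Prod>j<Suc a. real (ext m j)))"
  proof (rule sum.reindex_bij_betw[symmetric])
    show "bij_betw ext B C"
    proof (rule bij_betw_byWitness[where f'=rs])
      show "\<forall>m\<in>B. rs (ext m) = m"
        by (auto simp: B_def Sset_def rs_def ext_def fun_eq_iff PiE_def extensional_def)
      show "\<forall>c\<in>C. ext (rs c) = c"
      proof
        fix c assume c: "c \<in> C"
        have "(\<Sum>j<Suc a. c j) = N" using c by (auto simp: C_def Sset_def)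
        then have "N - (\<Sum>j<a. rs c j) = c a" by (simp add: rs_def)
        then show "ext (rs c) = c" using c
          by (auto simp: C_def Sset_def rs_def ext_def fun_eq_iff PiE_def extensional_def)
      qed
      show "ext ` B \<subseteq> C"
      proof
        fix c assume "c \<in> ext ` B"
        then obtain m where m: "m \<in> B" and c: "c = ext m" by auto
        have lt: "(\<Sum>j<a. m j) < N" and d: "N - (\<Sum>j<a. m j) \<in> PP p" using m by (auto simp: B_def Sset_def)
        have "(\<Sum>j<Suc a. c j) = N" using lt by (simp add: c sext) (simp add: ext_def)
        then show "c \<in> C" using m d lt unfolding C_def B_def Sset_def
          by (auto simp: c ext_def PiE_def extensional_def Pi_def less_Suc_eq)
      qed
      show "rs ` C \<subseteq> B"
      proof
        fix m assume "m \<in> rs ` C"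
        then obtain c where c: "c \<in> C" and m: "m = rs c" by auto
        have s: "(\<Sum>j<Suc a. c j) = N" and pp: "\<forall>j<Suc a. c j \<in> PP p" using c by (auto simp: C_def Sset_def)
        have sm: "(\<Sum>j<a. m j) = (\<Sum>j<a. c j)" by (simp add: m rs_def)
        have "c a \<in> PP p" using pp by auto
        then have "c a > 0" by (auto simp: PP_def)
        then have "(\<Sum>j<a. m j) < N" and "N - (\<Sum>j<a. m j) = c a" using s sm by auto
        then show "m \<in> B" using c \<open>c a \<in> PP p\<close> unfolding B_def C_def Sset_def
          by (auto simp: m rs_def PiE_def extensional_def Pi_def)
      qed
    qed
  qed
  also have "\<dots> = (\<Sum>m\<in>B. 1 / (\<Prod>j<a. real (m j)))"
  proof (rule sum.cong[OF refl])
    fix m assume "m \<in> B"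
    then have "N - (\<Sum>j<a. m j) > 0" by (auto simp: B_def Sset_def)
    moreover have "(\<Prod>j<a. real (ext m j)) = (\<Prod>j<a. real (m j))" by (auto simp: ext_def intro!: prod.cong)
    moreover have "ext m a = N - (\<Sum>j<a. m j)" by (simp add: ext_def)
    ultimately show "real (ext m a) / (\<Prod>j<Suc a. real (ext m j)) = 1 / (\<Prod>j<a. real (m j))"
    proof -
      assume h: "0 < N - (\<Sum>j<a. m j)" "(\<Prod>j<a. real (ext m j)) = (\<Prod>j<a. real (m j))" "ext m a = N - (\<Sum>j<a. m j)"
      have gen: "real x / (P * real x) = 1 / P" if "x > 0" for x :: nat and P :: real
        using that by (cases "P = 0") (simp_all add: field_simps)
      have "(\<Prod>j<Suc a. real (ext m j)) = (\<Prod>j<a. real (m j)) * real (ext m a)"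
        using h(2) by (simp add: prod.lessThan_Suc)
      moreover have "ext m a > 0" using h(1,3) by simp
      ultimately show ?thesis using gen[of "ext m a" "\<Prod>j<a. real (m j)"] by (simp only:)
    qed
  qed
  finally show ?thesis unfolding B_def C_def ..
qed

lemma step5:
  assumes "k < n"
  shows "(\<Sum>c\<in>Sset n K p Q. real (c k) / (\<Prod>j<n. real (c j)))
       = (\<Sum>c\<in>Sset n K p Q. real (c 0) / (\<Prod>j<n. real (c j)))"
proof -
  obtain \<sigma> where s: "bij_betw \<sigma> {..<n} {..<n}" and im: "\<sigma> ` {..<1} = {k}"
    using exists_perm[of "{k}" n 1] assms by auto
  have s0: "\<sigma> 0 = k" using im by auto
  have "(\<Sum>c\<in>Sset n K p Q. real (c 0) / (\<Prod>j<n. real (c j)))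
      = (\<Sum>c\<in>Sset n K p Q. real (pm n \<sigma> c 0) / (\<Prod>j<n. real (pm n \<sigma> c j)))"
    by (rule sym_sum[OF s])
  also have "\<dots> = (\<Sum>c\<in>Sset n K p Q. real (c k) / (\<Prod>j<n. real (c j)))"
  proof (rule sum.cong[OF refl])
    fix c
    have "(\<Prod>j<n. real (pm n \<sigma> c j)) = (\<Prod>j<n. real (c (\<sigma> j)))" by (auto simp: pm_def intro!: prod.cong)
    also have "\<dots> = (\<Prod>j<n. real (c j))" by (rule prod.reindex_bij_betw[OF s])
    finally show "real (pm n \<sigma> c 0) / (\<Prod>j<n. real (pm n \<sigma> c j)) = real (c k) / (\<Prod>j<n. real (c j))"
      using assms s0 by (simp add: pm_def)
  qed
  finally show ?thesis ..
qed

theorem corollary3p3: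
  fixes p a N :: nat
  assumes "prime p" and "odd p" and "a \<ge> 1" and "N > 0" and "p dvd N"
  shows "(\<Sum>b = 0..a. real (a choose b) * Fsum a b [] (2 * N) p)
           = real N / real (a + 1) * Zsum (a + 1) N p"
proof -
  define C where "C = Sset (Suc a) N p (\<lambda>s. s = N)"
  define T where "T = (\<Sum>c\<in>C. real (c a) / (\<Prod>j<Suc a. real (c j)))"
  have Z: "Zsum (a + 1) N p = (\<Sum>c\<in>C. 1 / (\<Prod>j<Suc a. real (c j)))"
    by (simp add: Zsum_def C_def Sset_def)
  have L: "(\<Sum>b = 0..a. real (a choose b) * Fsum a b [] (2 * N) p) = T"
    unfolding Fsum_empty step2 step3[OF assms(1,2)] step4 T_def C_def ..
  have "real (Suc a) * T = (\<Sum>k<Suc a. \<Sum>c\<in>C. real (c k) / (\<Prod>j<Suc a. real (c j)))"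
  proof -
    have "(\<Sum>k<Suc a. \<Sum>c\<in>C. real (c k) / (\<Prod>j<Suc a. real (c j))) = (\<Sum>k<Suc a. T)"
    proof (rule sum.cong[OF refl])
      fix k assume "k \<in> {..<Suc a}"
      then have "k < Suc a" by simp
      show "(\<Sum>c\<in>C. real (c k) / (\<Prod>j<Suc a. real (c j))) = T"
        unfolding T_def C_def step5[OF \<open>k < Suc a\<close>] step5[of a "Suc a", OF lessI] ..
    qed
    then show ?thesis by simp
  qed
  also have "\<dots> = (\<Sum>c\<in>C. (\<Sum>k<Suc a. real (c k)) / (\<Prod>j<Suc a. real (c j)))"
    by (subst sum.swap) (simp only: sum_divide_distrib)
  also have "\<dots> = (\<Sum>c\<in>C. real N / (\<Prod>j<Suc a. real (c j)))"
  proof (rule sum.cong[OF refl])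
    fix c assume "c \<in> C"
    then have "(\<Sum>k<Suc a. c k) = N" by (auto simp: C_def Sset_def)
    then have "(\<Sum>k<Suc a. real (c k)) = real N" by (metis of_nat_sum)
    then show "(\<Sum>k<Suc a. real (c k)) / (\<Prod>j<Suc a. real (c j)) = real N / (\<Prod>j<Suc a. real (c j))" by simp
  qed
  also have "\<dots> = real N * Zsum (a + 1) N p" unfolding Z by (simp add: sum_distrib_left)
  finally have "real (Suc a) * T = real N * Zsum (a + 1) N p" .
  then show ?thesis unfolding L by (simp add: field_simps)
qed

end
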